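(* Consider the regression model $Y=f(W,X)+\varepsilon$ with two-layer network $f(W,x)=1_p^\top\sigma(Wx)=\sum_{i=1}^p\sigma(W_i^\top x)$, where $x\in\mathbb{R}^d$, $W\in\mathbb{R}^{p\times d}$ has rows $W_i$, $\sigma$ is applied elementwise, and the network is trained with the least-squares loss $(Y-f(W,X))^2$. Let $\nabla f(W,x)=\sigma'(Wx)x^\top\in\mathbb{R}^{p\times d}$ and define the Fisher information tensor $I_W=\mathbb{E}[\nabla f(W,X)\otimes\nabla f(W,X)]$ (a $p^2\times d^2$ array with entries $I_W((i,i'),(j,j'))=\mathbb{E}[\sigma'(W_i^\top X)\sigma'(W_{i'}^\top X)X_jX_{j'}]$). Let $G=\{g_0,\dots,g_{d-1}\}$ be the group of circular shifts of $\mathbb{R}^d$, $(g_ix)_{(j+i)\bmod d}=x_j$, with the uniform distribution $\mathbb{Q}$, and let $\bar I_W=\mathbb{E}_X\big[(\mathbb{E}_{g}\nabla f(W,gX))\otimes(\mathbb{E}_g\nabla f(W,gX))\big]$. Then: 1. $I_W=\mathbb{E}\big[(\sigma'(WX)\otimes\sigma'(WX))\cdot(X\otimes X)^\top\big]$; if moreover $\sigma(u)=u^2/2$, then $I_W=(W\otimes W)\cdot\mathbb{E}(XX^\top\otimes XX^\top)$. 2. Assume $\sigma(u)=u^2/2$. For $v\in\mathbb{R}^d$ let $C_v$ be the circulant matrix with entries $C_v(i,j)=v_{i-j+1}$ (indices modulo $d$, taken in $\{1,\dots,d\}$). Then $\bar I_W=(W\otimes W)\cdot d^{-2}\,\mathbb{E}(C_XC_X^\top\otimes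 C_XC_X^\top)$. If furthermore $X\sim\mathcal{N}(0,I_d)$, then $$\bar I_W=(W\otimes W)\cdot F_2^*\cdot(F_2^2\odot M)\cdot F_2^*,$$ where $F$ is the $d\times d$ DFT matrix with entries $F_{j,k}=d^{-1/2}\exp(-2\pi\mathrm{i}(j-1)(k-1)/d)$ and rows $F_1,\dots,F_d$, $F_2=F\otimes F$, $F_2^2=F_2F_2$, $F_2^*$ is the entrywise complex conjugate of $F_2$, $\odot$ is the entrywise product, and $M$ is the $d^2\times d^2$ matrix with rows indexed by $(i,j)$, columns by $(i',j')$, and entries $$M_{iji'j'}=F_i^\top F_j\cdot F_{i'}^\top F_{j'}+F_i^\top F_{j'}\cdot F_{i'}^\top F_j+F_i^\top F_{i'}\cdot F_j^\top F_{j'}.$$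
   Context: $\otimes$ denotes the Kronecker product; for $p\times d$ matrices $A,B$, $A\otimes B$ is the $p^2\times d^2$ array with entries $(A\otimes B)((i,i'),(j,j'))=A_{ij}B_{i'j'}$. All expectations are assumed finite. *)

theory Defs
  imports "HOL-Probability.Probability"
begin

text \<open>Conventions: all indices are 0-based natural numbers. A matrix is a function
  nat => nat => 'a (only entries with indices in range matter); a vector is nat => 'a.
  Arrays indexed by pairs (such as Kronecker products, p^2 x d^2 arrays) are functions
  (nat * nat) => (nat * nat) => 'a, row index first.\<close>

definition mat_mult :: "nat \<Rightarrow> (nat \<Rightarrow> nat \<Rightarrow> 'a::comm_semiring_1) \<Rightarrow> (nat \<Rightarrow> nat \<Rightarrow> 'a) \<Rightarrow> nat \<Rightarrow> nat \<Rightarrow> 'a" where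
  "mat_mult n A B = (\<lambda>i j. \<Sum>k<n. A i k * B k j)"

definition mat_transpose :: "(nat \<Rightarrow> nat \<Rightarrow> 'a) \<Rightarrow> nat \<Rightarrow> nat \<Rightarrow> 'a" where
  "mat_transpose A = (\<lambda>i j. A j i)"

text \<open>A vector viewed as a column matrix (single column index 0).\<close>
definition colvec :: "(nat \<Rightarrow> 'a) \<Rightarrow> nat \<Rightarrow> nat \<Rightarrow> 'a" where
  "colvec v = (\<lambda>i j. v i)"

definition kron :: "(nat \<Rightarrow> nat \<Rightarrow> 'a::times) \<Rightarrow> (nat \<Rightarrow> nat \<Rightarrow> 'a) \<Rightarrow> nat \<times> nat \<Rightarrow> nat \<times> nat \<Rightarrow> 'a" where
  "kron A B = (\<lambda>(i, i') (j, j'). A i j * B i' j')"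

definition pmat_mult :: "(nat \<times> nat) set \<Rightarrow> (nat \<times> nat \<Rightarrow> nat \<times> nat \<Rightarrow> 'a::comm_semiring_1)
    \<Rightarrow> (nat \<times> nat \<Rightarrow> nat \<times> nat \<Rightarrow> 'a) \<Rightarrow> nat \<times> nat \<Rightarrow> nat \<times> nat \<Rightarrow> 'a" where
  "pmat_mult K A B = (\<lambda>r c. \<Sum>k\<in>K. A r k * B k c)"

definition pmat_transpose :: "(nat \<times> nat \<Rightarrow> nat \<times> nat \<Rightarrow> 'a) \<Rightarrow> nat \<times> nat \<Rightarrow> nat \<times> nat \<Rightarrow> 'a" where
  "pmat_transpose A = (\<lambda>r c. A c r)"

definition pexp :: "'w measure \<Rightarrow> ('w \<Rightarrow> nat \<times> nat \<Rightarrow> nat \<times> nat \<Rightarrow> real) \<Rightarrow> nat \<times> nat \<Rightarrow> nat \<times> nat \<Rightarrow> real" where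
  "pexp M A = (\<lambda>r c. \<integral>\<omega>. A \<omega> r c \<partial>M)"

definition mat_vec :: "nat \<Rightarrow> (nat \<Rightarrow> nat \<Rightarrow> real) \<Rightarrow> (nat \<Rightarrow> real) \<Rightarrow> nat \<Rightarrow> real" where
  "mat_vec d W x = (\<lambda>i. \<Sum>k<d. W i k * x k)"

definition grad_f :: "nat \<Rightarrow> (real \<Rightarrow> real) \<Rightarrow> (nat \<Rightarrow> nat \<Rightarrow> real) \<Rightarrow> (nat \<Rightarrow> real) \<Rightarrow> nat \<Rightarrow> nat \<Rightarrow> real" where
  "grad_f d \<sigma>' W x = (\<lambda>i j. \<sigma>' (mat_vec d W x i) * x j)"

text \<open>Circular shift g_i: (g_i x)_{(j+i) mod d} = x_j, i.e. (g_i x)_k = x_{(k-i) mod d}.\<close>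
definition cshift :: "nat \<Rightarrow> nat \<Rightarrow> (nat \<Rightarrow> real) \<Rightarrow> nat \<Rightarrow> real" where
  "cshift d i x = (\<lambda>k. x ((k + d - i mod d) mod d))"

definition avg_grad_f :: "nat \<Rightarrow> (real \<Rightarrow> real) \<Rightarrow> (nat \<Rightarrow> nat \<Rightarrow> real) \<Rightarrow> (nat \<Rightarrow> real) \<Rightarrow> nat \<Rightarrow> nat \<Rightarrow> real" where
  "avg_grad_f d \<sigma>' W x = (\<lambda>i j. (\<Sum>g<d. grad_f d \<sigma>' W (cshift d g x) i j) / real d)"

definition fisher :: "'w measure \<Rightarrow> nat \<Rightarrow> (real \<Rightarrow> real) \<Rightarrow> (nat \<Rightarrow> nat \<Rightarrow> real) \<Rightarrow> ('w \<Rightarrow> nat \<Rightarrow> real) \<Rightarrow> nat \<times> nat \<Rightarrow> nat \<times> nat \<Rightarrow> real" where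
  "fisher M d \<sigma>' W X = pexp M (\<lambda>\<omega>. kron (grad_f d \<sigma>' W (X \<omega>)) (grad_f d \<sigma>' W (X \<omega>)))"

definition fisher_bar :: "'w measure \<Rightarrow> nat \<Rightarrow> (real \<Rightarrow> real) \<Rightarrow> (nat \<Rightarrow> nat \<Rightarrow> real) \<Rightarrow> ('w \<Rightarrow> nat \<Rightarrow> real) \<Rightarrow> nat \<times> nat \<Rightarrow> nat \<times> nat \<Rightarrow> real" where
  "fisher_bar M d \<sigma>' W X = pexp M (\<lambda>\<omega>. kron (avg_grad_f d \<sigma>' W (X \<omega>)) (avg_grad_f d \<sigma>' W (X \<omega>)))"

text \<open>Circulant matrix C_v(i,j) = v_{(i-j) mod d} (0-based version of v_{i-j+1}).\<close>
definition circulant :: "nat \<Rightarrow> (nat \<Rightarrow> real) \<Rightarrow> nat \<Rightarrow> nat \<Rightarrow> real" where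
  "circulant d v = (\<lambda>i j. v ((i + d - j mod d) mod d))"

text \<open>DFT matrix F_{j,k} = d^{-1/2} exp(-2 pi i j k / d) (0-based).\<close>
definition dft :: "nat \<Rightarrow> nat \<Rightarrow> nat \<Rightarrow> complex" where
  "dft d = (\<lambda>j k. exp (- 2 * complex_of_real pi * \<i> * of_nat j * of_nat k / of_nat d) / complex_of_real (sqrt (real d)))"

text \<open>F_i^T F_j for rows F_i, F_j (plain transpose, no conjugation).\<close>
definition dft_dot :: "nat \<Rightarrow> nat \<Rightarrow> nat \<Rightarrow> complex" where
  "dft_dot d i j = (\<Sum>k<d. dft d i k * dft d j k)"

definition Mmat :: "nat \<Rightarrow> nat \<times> nat \<Rightarrow> nat \<times> nat \<Rightarrow> complex" where
  "Mmat d = (\<lambda>(i, j) (i', j'). dft_dot d i j * dft_dot d i' j' + dft_dot d i j' * dft_dot d i' j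
                               + dft_dot d i i' * dft_dot d j j')"

definition pidx :: "nat \<Rightarrow> (nat \<times> nat) set" where
  "pidx d = {0..<d} \<times> {0..<d}"

end

theory Submission
  imports Defs
begin


definition ee :: "nat \<Rightarrow> int \<Rightarrow> complex" where
  "ee d n = cis (- 2 * pi * real_of_int n / real d)"

definition DD :: "nat \<Rightarrow> int \<Rightarrow> 'a::{zero,one}" where
  "DD d n = (if int d dvd n then 1 else 0)"

lemma ee_add: "ee d (m + n) = ee d m * ee d n"
proof -
  have "- 2 * pi * real_of_int (m + n) / real d = - 2 * pi * real_of_int m / real d + - 2 * pi * real_of_int n / real d"
    by (simp add: add_divide_distrib[symmetric] algebra_simps)
  then show ?thesis unfolding ee_def by (simp add: cis_mult)
qed

lemma ee_mult_d: assumes "d > 0" shows "ee d (int d * k) = 1"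
proof -
  have "- 2 * pi * real_of_int (int d * k) / real d = 2 * pi * real_of_int (- k)"
    using assms by (simp add: field_simps)
  then have "ee d (int d * k) = cis (2 * pi * real_of_int (- k))" unfolding ee_def by simp
  also have "\<dots> = 1" by (rule cis_multiple_2pi) simp
  finally show ?thesis .
qed

lemma ee_cong: assumes "d > 0" "int d dvd (m - n)" shows "ee d m = ee d n"
proof -
  obtain k where "m - n = int d * k" using assms(2) by (auto simp: dvd_def)
  then have "m = n + int d * k" by simp
  then show ?thesis using ee_add[of d n "int d * k"] ee_mult_d[OF assms(1)] by simp
qed

lemma ee_pow: "ee d (int k * n) = ee d n ^ k"
proof -
  have "- 2 * pi * real_of_int (int k * n) / real d = real k * (- 2 * pi * real_of_int n / real d)"
    by simp
  then show ?thesis unfolding ee_def Complex.DeMoivre by (rule arg_cong)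
qed

lemma ee_eq_1: assumes "d > 0" shows "ee d n = 1 \<longleftrightarrow> int d dvd n"
proof
  assume "int d dvd n" then show "ee d n = 1"
    using ee_cong[OF assms, of n 0] by (simp add: ee_def)
next
  assume "ee d n = 1"
  then have "cos (- 2 * pi * real_of_int n / real d) = 1"
    unfolding ee_def by (metis cis.sel(1) one_complex.sel(1))
  then obtain m :: int where m: "- 2 * pi * real_of_int n / real d = real_of_int m * 2 * pi"
    using cos_one_2pi_int by blast
  have e: "(- 2 * pi * real_of_int n / real d) * real d = - 2 * pi * real_of_int n" using assms by simp
  have e2: "(real_of_int m * 2 * pi) * real d = - 2 * pi * real_of_int n" using e unfolding m .
  have "(- real_of_int n) * (2 * pi) = (real_of_int m * real d) * (2 * pi)"
    using e2 by (simp add: algebra_simps)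
  then have "- real_of_int n = real_of_int m * real d" using pi_gt_zero
    by (metis mult_cancel_right pi_neq_zero zero_neq_numeral mult_eq_0_iff)
  then have "n = - (m * int d)"
    by (metis minus_equation_iff of_int_eq_iff of_int_minus of_int_mult of_int_of_nat_eq)
  then show "int d dvd n" by simp
qed

lemma ee_geo: assumes "d > 0"
  shows "(\<Sum>k<d. ee d (int k * n)) = (if int d dvd n then of_nat d else 0)"
proof (cases "int d dvd n")
  case True
  then have "\<And>k. ee d (int k * n) = 1" using ee_eq_1[OF assms]
    by (simp add: dvd_mult)
  then show ?thesis using True by simp
next
  case False
  then have ne: "ee d n \<noteq> 1" using ee_eq_1[OF assms] by simp
  have "(\<Sum>k<d. ee d (int k * n)) = (\<Sum>k<d. ee d n ^ k)" by (simp add: ee_pow)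
  also have "\<dots> = (ee d n ^ d - 1) / (ee d n - 1)" using ne by (rule geometric_sum)
  also have "ee d n ^ d = 1" using ee_pow[of d d n] ee_eq_1[OF assms, of "int d * n"] by simp
  finally show ?thesis using False by simp
qed

lemma cnj_ee: "cnj (ee d n) = ee d (- n)"
  unfolding ee_def by (simp add: cis_cnj)

lemma dft_ee: "dft d j k = ee d (int j * int k) / complex_of_real (sqrt (real d))"
proof -
  have "exp (- 2 * complex_of_real pi * \<i> * of_nat j * of_nat k / of_nat d)
      = exp (\<i> * complex_of_real (- 2 * pi * real_of_int (int j * int k) / real d))"
    by (simp add: field_simps)
  then show ?thesis unfolding dft_def ee_def by (simp add: cis_conv_exp)
qed

lemma collapse:
  fixes h :: "int \<Rightarrow> 'a::comm_ring_1"
  assumes d: "d > 0" and h: "\<And>x y. int d dvd (x - y) \<Longrightarrow> h x = h y"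
  shows "(\<Sum>c<d. DD d (r + int c) * h (int c)) = h (- r)"
proof -
  define c0 where "c0 = nat ((- r) mod int d)"
  have c0: "c0 < d" using d unfolding c0_def by (simp add: nat_less_iff)
  have ic0: "int c0 = (- r) mod int d" using d unfolding c0_def by simp
  have iff: "int d dvd (r + int c) \<longleftrightarrow> c = c0" if "c < d" for c
  proof -
    have "int d dvd (r + int c) \<longleftrightarrow> int c mod int d = (- r) mod int d"
      by (metis add.commute diff_minus_eq_add mod_eq_dvd_iff)
    also have "int c mod int d = int c" using that by simp
    finally show ?thesis using ic0 by linarith
  qed
  have "(\<Sum>c<d. DD d (r + int c) * h (int c)) = (\<Sum>c<d. if c = c0 then h (int c0) else 0)"
    by (intro sum.cong refl) (auto simp: DD_def iff)
  also have "\<dots> = h (int c0)" using c0 by simp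
  also have "\<dots> = h (- r)" by (rule h) (use mod_eq_dvd_iff[of "(-r) mod int d" "int d" "-r"] in \<open>simp add: ic0\<close>)
  finally show ?thesis .
qed

lemma DD_cong: "int d dvd (x - y) \<Longrightarrow> DD d x = DD d y"
  unfolding DD_def using dvd_add_right_iff[of "int d" "x - y" y] by simp

lemma DD_neg: "DD d (- x) = DD d x"
  unfolding DD_def by simp

lemma DD_sq: "(DD d x :: 'a::comm_ring_1) * DD d x = DD d x"
  unfolding DD_def by simp

lemma of_real_DD: "of_real (DD d x) = DD d x"
  unfolding DD_def by simp

lemma sum_pidx: "(\<Sum>k\<in>pidx d. f k) = (\<Sum>a<d. \<Sum>b<d. f (a, b))"
  unfolding pidx_def atLeast0LessThan by (simp add: sum.cartesian_product)

lemma sqrt_d_sq: "complex_of_real (sqrt (real d)) * complex_of_real (sqrt (real d)) = of_nat d"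
  by (simp only: of_real_mult[symmetric]) simp

lemma dft_sym: "dft d j k = dft d k j"
  unfolding dft_def by (simp add: ac_simps)

lemma dft_dot_DD: assumes "d > 0" shows "dft_dot d i j = DD d (int i + int j)"
proof -
  have "dft_dot d i j = (\<Sum>k<d. ee d (int k * (int i + int j))) / of_nat d"
    unfolding dft_dot_def dft_ee sum_divide_distrib
  proof (intro sum.cong refl)
    fix k assume "k \<in> {..<d}"
    have "ee d (int k * (int i + int j)) = ee d (int i * int k) * ee d (int j * int k)"
      by (simp only: ee_add[symmetric]) (simp add: algebra_simps)
    then show "ee d (int i * int k) / complex_of_real (sqrt (real d)) * (ee d (int j * int k) / complex_of_real (sqrt (real d)))
       = ee d (int k * (int i + int j)) / of_nat d"
      by (simp add: sqrt_d_sq[symmetric])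
  qed
  also have "\<dots> = DD d (int i + int j)" using assms by (simp add: ee_geo DD_def)
  finally show ?thesis .
qed

lemma FF_DD: assumes "d > 0"
  shows "pmat_mult (pidx d) (kron (dft d) (dft d)) (kron (dft d) (dft d)) (r0, r1) (c0, c1)
       = DD d (int r0 + int c0) * DD d (int r1 + int c1)"
proof -
  have eq: "dft d r0 a * dft d r1 b * (dft d a c0 * dft d b c1)
        = (dft d r0 a * dft d c0 a) * (dft d r1 b * dft d c1 b)" for a b
    by (simp only: dft_sym[of d a c0] dft_sym[of d b c1]) (simp only: ac_simps)
  have "pmat_mult (pidx d) (kron (dft d) (dft d)) (kron (dft d) (dft d)) (r0, r1) (c0, c1)
      = (\<Sum>a<d. \<Sum>b<d. (dft d r0 a * dft d c0 a) * (dft d r1 b * dft d c1 b))"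
    unfolding pmat_mult_def sum_pidx kron_def by (simp only: prod.case eq)
  also have "\<dots> = dft_dot d r0 c0 * dft_dot d r1 c1"
    unfolding dft_dot_def sum_product by simp
  finally show ?thesis using assms by (simp add: dft_dot_DD)
qed

lemma geo_DD: assumes "d > 0" shows "(\<Sum>k<d. ee d (int k * n)) = of_nat d * DD d n"
  using ee_geo[OF assms] by (simp add: DD_def)

lemma B_DD: assumes "d > 0"
  shows "pmat_mult (pidx d) (kron (dft d) (dft d)) (kron (dft d) (dft d)) (r0, r1) (c0, c1) * Mmat d (r0, r1) (c0, c1)
     = DD d (int r0 + int c0) * DD d (int r1 + int c1) * (1 + DD d (int r0 + int r1) + DD d (int r0 - int r1))"
proof (cases "int d dvd (int r0 + int c0) \<and> int d dvd (int r1 + int c1)")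
  case True
  have 1: "DD d (int c0 + int c1) = (DD d (int r0 + int r1) :: complex)"
  proof -
    have "DD d (int c0 + int c1) = (DD d (- (int r0 + int r1)) :: complex)"
      by (rule DD_cong) (use True in \<open>metis dvd_add add.commute add.left_commute diff_minus_eq_add add.assoc\<close>)
    then show ?thesis using DD_neg[of d "int r0 + int r1"] by simp
  qed
  have 2: "DD d (int r0 + int c1) = (DD d (int r0 - int r1) :: complex)"
    by (rule DD_cong) (use True in \<open>simp add: add.commute[of "int c1"]\<close>)
  have 3: "DD d (int c0 + int r1) = (DD d (int r0 - int r1) :: complex)"
  proof -
    have "DD d (int c0 + int r1) = (DD d (- (int r0 - int r1)) :: complex)"
      by (rule DD_cong) (use True in \<open>simp add: add.commute[of "int c0"]\<close>)
    then show ?thesis using DD_neg[of d "int r0 - int r1"] by simp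
  qed
  have 4: "DD d (int r0 + int c0) = (1::complex)" "DD d (int r1 + int c1) = (1::complex)"
    using True by (auto simp: DD_def)
  show ?thesis using assms unfolding FF_DD[OF assms] Mmat_def
    by (simp only: dft_dot_DD 1 2 3 4 Let_def prod.case) (simp add: DD_sq)
next
  case False
  then have "DD d (int r0 + int c0) * DD d (int r1 + int c1) = (0::complex)" by (auto simp: DD_def)
  then show ?thesis unfolding FF_DD[OF assms] by simp
qed

lemma pmat_assoc: "pmat_mult K (pmat_mult K A B) C = pmat_mult K A (pmat_mult K B C)"
proof (intro ext)
  fix r c
  have "pmat_mult K (pmat_mult K A B) C r c = (\<Sum>k\<in>K. \<Sum>l\<in>K. A r l * (B l k * C k c))"
    unfolding pmat_mult_def sum_distrib_right by (simp add: mult.assoc)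
  also have "\<dots> = (\<Sum>l\<in>K. \<Sum>k\<in>K. A r l * (B l k * C k c))" by (rule sum.swap)
  also have "\<dots> = pmat_mult K A (pmat_mult K B C) r c"
    unfolding pmat_mult_def sum_distrib_left ..
  finally show "pmat_mult K (pmat_mult K A B) C r c = pmat_mult K A (pmat_mult K B C) r c" .
qed

lemma cdft: "cnj (dft d j k) = ee d (- (int j * int k)) / complex_of_real (sqrt (real d))"
  unfolding dft_ee by (simp add: cnj_ee)

lemma ee_respects: assumes "d > 0" shows "int d dvd (x - y) \<Longrightarrow> ee d (- (x * c)) = ee d (- (y * c))"
proof -
  assume a: "int d dvd (x - y)"
  have "- (x * c) - - (y * c) = - ((x - y) * c)" by (simp add: algebra_simps)
  moreover have "int d dvd - ((x - y) * c)" using a by simp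
  ultimately show ?thesis by (intro ee_cong[OF assms]) simp
qed

lemma inner_T: assumes d: "d > 0"
  shows "pmat_mult (pidx d) (\<lambda>r c. pmat_mult (pidx d) (kron (dft d) (dft d)) (kron (dft d) (dft d)) r c * Mmat d r c)
            (\<lambda>r c. cnj (kron (dft d) (dft d) r c)) (r0, r1) (j, j')
       = (1 + DD d (int r0 + int r1) + DD d (int r0 - int r1)) * ee d (int r0 * int j) * ee d (int r1 * int j') / of_nat d"
proof -
  define G :: complex where "G = 1 + DD d (int r0 + int r1) + DD d (int r0 - int r1)"
  have "pmat_mult (pidx d) (\<lambda>r c. pmat_mult (pidx d) (kron (dft d) (dft d)) (kron (dft d) (dft d)) r c * Mmat d r c)
            (\<lambda>r c. cnj (kron (dft d) (dft d) r c)) (r0, r1) (j, j')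
      = (\<Sum>c0<d. \<Sum>c1<d. G / of_nat d * ((DD d (int r0 + int c0) * ee d (- (int c0 * int j)))
            * (DD d (int r1 + int c1) * ee d (- (int c1 * int j')))))"
    unfolding pmat_mult_def[of "pidx d" _ "\<lambda>r c. cnj (kron (dft d) (dft d) r c)"] sum_pidx
  proof (intro sum.cong refl)
    fix c0 c1
    show "pmat_mult (pidx d) (kron (dft d) (dft d)) (kron (dft d) (dft d)) (r0, r1) (c0, c1) * Mmat d (r0, r1) (c0, c1) *
          cnj (kron (dft d) (dft d) (c0, c1) (j, j'))
       = G / of_nat d * ((DD d (int r0 + int c0) * ee d (- (int c0 * int j)))
            * (DD d (int r1 + int c1) * ee d (- (int c1 * int j'))))"
      unfolding B_DD[OF d] unfolding G_def kron_def prod.case complex_cnj_mult cdft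
      by (simp add: sqrt_d_sq[symmetric] field_simps)
  qed
  also have "\<dots> = G / of_nat d * ((\<Sum>c0<d. DD d (int r0 + int c0) * ee d (- (int c0 * int j)))
            * (\<Sum>c1<d. DD d (int r1 + int c1) * ee d (- (int c1 * int j'))))"
    by (simp only: sum_product) (simp only: sum_distrib_left)
  also have "(\<Sum>c0<d. DD d (int r0 + int c0) * ee d (- (int c0 * int j))) = ee d (- (- int r0 * int j))"
    by (rule collapse[OF d, where h = "\<lambda>c. ee d (- (c * int j))"]) (rule ee_respects[OF d])
  also have "(\<Sum>c1<d. DD d (int r1 + int c1) * ee d (- (int c1 * int j'))) = ee d (- (- int r1 * int j'))"
    by (rule collapse[OF d, where h = "\<lambda>c. ee d (- (c * int j'))"]) (rule ee_respects[OF d])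
  finally show ?thesis unfolding G_def by simp
qed

lemma ee_respects2: assumes "d > 0" shows "int d dvd (x - y) \<Longrightarrow> ee d (x * n) = ee d (y * n)"
proof -
  assume a: "int d dvd (x - y)"
  have "x * n - y * n = (x - y) * n" by (simp add: algebra_simps)
  moreover have "int d dvd (x - y) * n" using a by simp
  ultimately show ?thesis by (intro ee_cong[OF assms]) simp
qed

lemma T_val: assumes d: "d > 0"
  shows "pmat_mult (pidx d) (\<lambda>r c. cnj (kron (dft d) (dft d) r c))
          (pmat_mult (pidx d) (\<lambda>r c. pmat_mult (pidx d) (kron (dft d) (dft d)) (kron (dft d) (dft d)) r c * Mmat d r c)
            (\<lambda>r c. cnj (kron (dft d) (dft d) r c))) (a, b) (j, j')
       = DD d (int j - int a) * DD d (int j' - int b)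
         + (DD d ((int j - int a) - (int j' - int b)) + DD d ((int j - int a) + (int j' - int b))) / of_nat d"
proof -
  define u where "u = int j - int a"
  define v where "v = int j' - int b"
  have "pmat_mult (pidx d) (\<lambda>r c. cnj (kron (dft d) (dft d) r c))
          (pmat_mult (pidx d) (\<lambda>r c. pmat_mult (pidx d) (kron (dft d) (dft d)) (kron (dft d) (dft d)) r c * Mmat d r c)
            (\<lambda>r c. cnj (kron (dft d) (dft d) r c))) (a, b) (j, j')
      = (\<Sum>r0<d. \<Sum>r1<d. (1 + DD d (int r0 + int r1) + DD d (int r0 - int r1)) * (ee d (int r0 * u) * ee d (int r1 * v)))
         / (of_nat d * of_nat d)"
    unfolding pmat_mult_def[of "pidx d" "\<lambda>r c. cnj (kron (dft d) (dft d) r c)"] sum_pidx sum_divide_distrib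
  proof (intro sum.cong refl)
    fix r0 r1
    have e1: "ee d (- (int a * int r0)) * ee d (int r0 * int j) = ee d (int r0 * u)"
      unfolding u_def ee_add[symmetric] by (simp add: algebra_simps)
    have e2: "ee d (- (int b * int r1)) * ee d (int r1 * int j') = ee d (int r1 * v)"
      unfolding v_def ee_add[symmetric] by (simp add: algebra_simps)
    show "cnj (kron (dft d) (dft d) (a, b) (r0, r1)) *
        pmat_mult (pidx d) (\<lambda>r c. pmat_mult (pidx d) (kron (dft d) (dft d)) (kron (dft d) (dft d)) r c * Mmat d r c)
          (\<lambda>r c. cnj (kron (dft d) (dft d) r c)) (r0, r1) (j, j')
      = (1 + DD d (int r0 + int r1) + DD d (int r0 - int r1)) * (ee d (int r0 * u) * ee d (int r1 * v))
         / (of_nat d * of_nat d)"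
      unfolding inner_T[OF d] unfolding kron_def prod.case complex_cnj_mult cdft
        e1[symmetric] e2[symmetric]
      by (simp add: sqrt_d_sq[symmetric] field_simps)
  qed
  also have "(\<Sum>r0<d. \<Sum>r1<d. (1 + DD d (int r0 + int r1) + DD d (int r0 - int r1)) * (ee d (int r0 * u) * ee d (int r1 * v)))
     = (\<Sum>r0<d. ee d (int r0 * u)) * (\<Sum>r1<d. ee d (int r1 * v))
       + (\<Sum>r0<d. ee d (int r0 * u) * (\<Sum>r1<d. DD d (int r0 + int r1) * ee d (int r1 * v)))
       + (\<Sum>r0<d. ee d (int r0 * u) * (\<Sum>r1<d. DD d (- int r0 + int r1) * ee d (int r1 * v)))"
  proof -
    have n: "DD d (int r0 - int r1) = (DD d (- int r0 + int r1) :: complex)" for r0 r1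
      using DD_neg[of d "int r0 - int r1"] by (simp add: eq_commute)
    have "(\<Sum>r0<d. \<Sum>r1<d. (1 + DD d (int r0 + int r1) + DD d (int r0 - int r1)) * (ee d (int r0 * u) * ee d (int r1 * v)))
      = (\<Sum>r0<d. \<Sum>r1<d. ee d (int r0 * u) * ee d (int r1 * v)
          + ee d (int r0 * u) * (DD d (int r0 + int r1) * ee d (int r1 * v))
          + ee d (int r0 * u) * (DD d (- int r0 + int r1) * ee d (int r1 * v)))"
      by (intro sum.cong refl) (unfold n, simp add: algebra_simps)
    also have "\<dots> = (\<Sum>r0<d. ee d (int r0 * u) * (\<Sum>r1<d. ee d (int r1 * v)))
       + (\<Sum>r0<d. ee d (int r0 * u) * (\<Sum>r1<d. DD d (int r0 + int r1) * ee d (int r1 * v)))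
       + (\<Sum>r0<d. ee d (int r0 * u) * (\<Sum>r1<d. DD d (- int r0 + int r1) * ee d (int r1 * v)))"
      by (simp only: sum.distrib sum_distrib_left)
    also have "(\<Sum>r0<d. ee d (int r0 * u) * (\<Sum>r1<d. ee d (int r1 * v)))
       = (\<Sum>r0<d. ee d (int r0 * u)) * (\<Sum>r1<d. ee d (int r1 * v))"
      by (simp only: sum_distrib_right)
    finally show ?thesis .
  qed
  also have "(\<Sum>r0<d. ee d (int r0 * u) * (\<Sum>r1<d. DD d (int r0 + int r1) * ee d (int r1 * v)))
      = (\<Sum>r0<d. ee d (int r0 * (u - v)))"
  proof (intro sum.cong refl)
    fix r0
    have "(\<Sum>r1<d. DD d (int r0 + int r1) * ee d (int r1 * v)) = ee d (- int r0 * v)"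
      by (rule collapse[OF d, where h = "\<lambda>c. ee d (c * v)"]) (rule ee_respects2[OF d])
    then show "ee d (int r0 * u) * (\<Sum>r1<d. DD d (int r0 + int r1) * ee d (int r1 * v)) = ee d (int r0 * (u - v))"
      by (simp add: ee_add[symmetric] algebra_simps)
  qed
  also have "(\<Sum>r0<d. ee d (int r0 * u) * (\<Sum>r1<d. DD d (- int r0 + int r1) * ee d (int r1 * v)))
      = (\<Sum>r0<d. ee d (int r0 * (u + v)))"
  proof (intro sum.cong refl)
    fix r0
    have "(\<Sum>r1<d. DD d (- int r0 + int r1) * ee d (int r1 * v)) = ee d (- (- int r0) * v)"
      by (rule collapse[OF d, where h = "\<lambda>c. ee d (c * v)"]) (rule ee_respects2[OF d])
    then show "ee d (int r0 * u) * (\<Sum>r1<d. DD d (- int r0 + int r1) * ee d (int r1 * v)) = ee d (int r0 * (u + v))"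
      by (simp add: ee_add[symmetric] algebra_simps)
  qed
  also have "(\<Sum>r0<d. ee d (int r0 * u)) * (\<Sum>r1<d. ee d (int r1 * v)) + (\<Sum>r0<d. ee d (int r0 * (u - v)))
      + (\<Sum>r0<d. ee d (int r0 * (u + v)))
     = of_nat d * DD d u * (of_nat d * DD d v) + of_nat d * DD d (u - v) + of_nat d * DD d (u + v)"
    by (simp only: geo_DD[OF d])
  also have "(of_nat d * DD d u * (of_nat d * DD d v) + of_nat d * DD d (u - v) + of_nat d * DD d (u + v))
       / (of_nat d * of_nat d)
     = DD d u * DD d v + (DD d (u - v) + DD d (u + v)) / (of_nat d :: complex)"
    using d by (simp add: field_simps)
  finally show ?thesis unfolding u_def v_def .
qed

definition iss :: "nat \<Rightarrow> nat \<Rightarrow> nat \<Rightarrow> nat \<Rightarrow> real" where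
  "iss a b c e = of_bool (a = b) * of_bool (c = e) + of_bool (a = c) * of_bool (b = e) + of_bool (a = e) * of_bool (b = c)"

definition idx :: "nat \<Rightarrow> nat \<Rightarrow> nat \<Rightarrow> nat" where
  "idx d a m = (a + d - m mod d) mod d"

lemma idx_int: assumes "m < d" shows "int (idx d a m) = (int a - int m) mod int d"
proof -
  have "int (a + d - m) = (int a - int m) + int d" using assms by simp
  have "int ((a + d - m) mod d) = int (a + d - m) mod int d" by (rule of_nat_mod)
  also have "\<dots> = ((int a - int m) + int d) mod int d" using \<open>int (a + d - m) = (int a - int m) + int d\<close> by simp
  also have "\<dots> = (int a - int m) mod int d" by simp
  finally show ?thesis using assms unfolding idx_def by simp
qed

lemma idx_eq: assumes "m < d" "n < d"
  shows "(of_bool (idx d a m = idx d b n) :: real) = DD d ((int a - int m) - (int b - int n))"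
proof -
  have "idx d a m = idx d b n \<longleftrightarrow> int (idx d a m) = int (idx d b n)" by simp
  also have "\<dots> \<longleftrightarrow> int d dvd ((int a - int m) - (int b - int n))"
    unfolding idx_int[OF assms(1)] idx_int[OF assms(2)] by (rule mod_eq_dvd_iff)
  finally show ?thesis unfolding DD_def by simp
qed

lemma DD_respects: "int d dvd (x - y) \<Longrightarrow> DD d (s + x) = DD d (s + y)"
  by (rule DD_cong) simp

lemma E_sum: assumes d: "d > 0"
  shows "(\<Sum>m<d. \<Sum>n<d. iss (idx d a m) (idx d j m) (idx d b n) (idx d j' n))
    = of_nat d * of_nat d * DD d (int a - int j) * DD d (int b - int j')
      + of_nat d * DD d ((int j - int a) - (int j' - int b)) + of_nat d * DD d ((int j - int a) + (int j' - int b))"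
proof -
  have "(\<Sum>m<d. \<Sum>n<d. iss (idx d a m) (idx d j m) (idx d b n) (idx d j' n))
     = (\<Sum>m<d. \<Sum>n<d. DD d (int a - int j) * DD d (int b - int j')
        + DD d ((int a - int m - int b) + int n) * DD d ((int j - int m - int j') + int n)
        + DD d ((int a - int m - int j') + int n) * DD d ((int j - int m - int b) + int n))"
  proof (intro sum.cong refl)
    fix m n assume "m \<in> {..<d}" "n \<in> {..<d}"
    then have mn: "m < d" "n < d" by auto
    show "iss (idx d a m) (idx d j m) (idx d b n) (idx d j' n)
      = DD d (int a - int j) * DD d (int b - int j')
        + DD d ((int a - int m - int b) + int n) * DD d ((int j - int m - int j') + int n)
        + DD d ((int a - int m - int j') + int n) * DD d ((int j - int m - int b) + int n)"
      unfolding iss_def idx_eq[OF mn(1) mn(1)] idx_eq[OF mn(2) mn(2)] idx_eq[OF mn(1) mn(2)]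
      by (simp add: algebra_simps)
  qed
  also have "\<dots> = (\<Sum>m<d. of_nat d * DD d (int a - int j) * DD d (int b - int j')
        + DD d ((int j - int a) - (int j' - int b)) + DD d ((int j - int a) + (int j' - int b)))"
  proof (intro sum.cong refl)
    fix m
    have 1: "(\<Sum>n<d. DD d ((int a - int m - int b) + int n) * DD d ((int j - int m - int j') + int n))
       = (DD d ((int j - int m - int j') + - (int a - int m - int b)) :: real)"
      by (rule collapse[OF d, where h = "\<lambda>c. DD d ((int j - int m - int j') + c)"]) (rule DD_respects)
    have 2: "(\<Sum>n<d. DD d ((int a - int m - int j') + int n) * DD d ((int j - int m - int b) + int n))
       = (DD d ((int j - int m - int b) + - (int a - int m - int j')) :: real)"
      by (rule collapse[OF d, where h = "\<lambda>c. DD d ((int j - int m - int b) + c)"]) (rule DD_respects)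
    have 3: "(int j - int m - int j') + - (int a - int m - int b) = (int j - int a) - (int j' - int b)" by simp
    have 4: "(int j - int m - int b) + - (int a - int m - int j') = (int j - int a) + (int j' - int b)" by simp
    show "(\<Sum>n<d. (DD d (int a - int j) :: real) * DD d (int b - int j')
        + DD d ((int a - int m - int b) + int n) * DD d ((int j - int m - int j') + int n)
        + DD d ((int a - int m - int j') + int n) * DD d ((int j - int m - int b) + int n))
      = of_nat d * DD d (int a - int j) * DD d (int b - int j')
        + DD d ((int j - int a) - (int j' - int b)) + DD d ((int j - int a) + (int j' - int b))"
      unfolding sum.distrib 1 2 3 4 by simp
  qed
  also have "\<dots> = of_nat d * of_nat d * DD d (int a - int j) * DD d (int b - int j')
      + of_nat d * DD d ((int j - int a) - (int j' - int b)) + of_nat d * DD d ((int j - int a) + (int j' - int b))"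
    unfolding sum.distrib by (simp add: algebra_simps)
  finally show ?thesis .
qed

definition mom :: "nat \<Rightarrow> real" where
  "mom n = (\<integral>x. std_normal_density x * x ^ n \<partial>lborel)"

lemma mom_vals: "mom 1 = 0" "mom 2 = 1" "mom 3 = 0" "mom 4 = 3"
proof -
  show "mom 1 = 0" using integral_std_normal_moment_odd[of 0] unfolding mom_def by simp
  show "mom 3 = 0" using integral_std_normal_moment_odd[of 1] unfolding mom_def by simp
  show "mom 2 = 1" using integral_std_normal_moment_even[of 1] unfolding mom_def by simp
  have "fact 4 / (2 ^ 2 * fact 2) = (3::real)" by (simp add: fact_numeral)
  then show "mom 4 = 3" using integral_std_normal_moment_even[of 2] unfolding mom_def by simp
qed

lemma mom_Suc: "mom (Suc 0) = 0" "mom (Suc (Suc 0)) = 1" "mom (Suc (Suc (Suc 0))) = 0" "mom (Suc (Suc (Suc (Suc 0)))) = 3"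
  using mom_vals by (simp_all add: numeral_eq_Suc)

lemma gauss_pow:
  assumes "distributed M lborel Y std_normal_density"
  shows "integrable M (\<lambda>\<omega>. Y \<omega> ^ n)" "(\<integral>\<omega>. Y \<omega> ^ n \<partial>M) = mom n"
proof -
  show "integrable M (\<lambda>\<omega>. Y \<omega> ^ n)"
    using distributed_integrable[OF assms, of "\<lambda>x. x ^ n"] integrable_std_normal_moment[of n] by simp
  show "(\<integral>\<omega>. Y \<omega> ^ n \<partial>M) = mom n"
    using distributed_integral[OF assms, of "\<lambda>x. x ^ n"] unfolding mom_def by simp
qed

lemma gauss4:
  assumes P: "prob_space M"
    and ind: "prob_space.indep_vars M (\<lambda>_. borel) (\<lambda>j \<omega>. X \<omega> j) {0..<d}"
    and dist: "\<forall>j<d. distributed M lborel (\<lambda>\<omega>. X \<omega> j) std_normal_density"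
    and abce: "a < d" "b < d" "c < d" "e < d"
  shows "integrable M (\<lambda>\<omega>. X \<omega> a * X \<omega> b * X \<omega> c * X \<omega> e)"
    "(\<integral>\<omega>. X \<omega> a * X \<omega> b * X \<omega> c * X \<omega> e \<partial>M) = iss a b c e"
proof -
  define N where "N = {#a, b, c, e#}"
  define S where "S = set_mset N"
  have prod: "X \<omega> a * X \<omega> b * X \<omega> c * X \<omega> e = (\<Prod>k\<in>S. X \<omega> k ^ count N k)" for \<omega>
  proof -
    have "X \<omega> a * X \<omega> b * X \<omega> c * X \<omega> e = prod_mset (image_mset (\<lambda>k. X \<omega> k) N)"
      unfolding N_def by (simp add: ac_simps)
    then show ?thesis unfolding S_def image_prod_mset_multiplicity .
  qed
  have S: "finite S" "S \<subseteq> {0..<d}" unfolding S_def N_def using abce by auto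
  have ind2: "prob_space.indep_vars M (\<lambda>_. borel) (\<lambda>k \<omega>. X \<omega> k ^ count N k) S"
    using prob_space.indep_vars_compose2[OF P prob_space.indep_vars_subset[OF P ind S(2)],
        of "\<lambda>k t. t ^ count N k" "\<lambda>_. borel"] by simp
  have int: "integrable M (\<lambda>\<omega>. X \<omega> k ^ count N k)" if "k \<in> S" for k
    using gauss_pow(1)[of M "\<lambda>\<omega>. X \<omega> k"] dist S(2) that by auto
  show "integrable M (\<lambda>\<omega>. X \<omega> a * X \<omega> b * X \<omega> c * X \<omega> e)"
    unfolding prod using prob_space.indep_vars_integrable[OF P S(1) ind2 int] by simp
  have "(\<integral>\<omega>. X \<omega> a * X \<omega> b * X \<omega> c * X \<omega> e \<partial>M) = (\<Prod>k\<in>S. \<integral>\<omega>. X \<omega> k ^ count N k \<partial>M)"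
    unfolding prod using prob_space.indep_vars_lebesgue_integral[OF P S(1) ind2 int] by simp
  also have "\<dots> = (\<Prod>k\<in>S. mom (count N k))"
  proof (intro prod.cong refl)
    fix k assume "k \<in> S"
    then have "k < d" using S(2) by auto
    then show "(\<integral>\<omega>. X \<omega> k ^ count N k \<partial>M) = mom (count N k)"
      using gauss_pow(2)[of M "\<lambda>\<omega>. X \<omega> k"] dist by simp
  qed
  also have "\<dots> = iss a b c e"
    unfolding S_def N_def iss_def
    by (cases "a = b"; cases "a = c"; cases "a = e"; cases "b = c"; cases "b = e"; cases "c = e")
       (simp_all add: mom_Suc insert_commute)
  finally show "(\<integral>\<omega>. X \<omega> a * X \<omega> b * X \<omega> c * X \<omega> e \<partial>M) = iss a b c e" .
qed



lemma sigma_id: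
  assumes "\<forall>u. (\<sigma> has_real_derivative \<sigma>' u) (at u)" "\<sigma> = (\<lambda>u. u\<^sup>2 / 2)"
  shows "\<sigma>' u = u"
proof -
  have "((\<lambda>u::real. u\<^sup>2 / 2) has_real_derivative u) (at u)"
    by (auto intro!: derivative_eq_intros)
  then show ?thesis using assms DERIV_unique by metis
qed

abbreviation CC :: "nat \<Rightarrow> (nat \<Rightarrow> real) \<Rightarrow> nat \<Rightarrow> nat \<Rightarrow> real" where
  "CC d x \<equiv> mat_mult d (circulant d x) (mat_transpose (circulant d x))"

lemma CC_idx: "CC d x a j = (\<Sum>m<d. x (idx d a m) * x (idx d j m))"
  unfolding mat_mult_def mat_transpose_def circulant_def idx_def ..

lemma avg_eq:
  assumes "\<And>u. \<sigma>' u = u"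
  shows "avg_grad_f d \<sigma>' W x i j = (\<Sum>k<d. W i k * CC d x k j) / real d"
proof -
  have "(\<Sum>g<d. grad_f d \<sigma>' W (cshift d g x) i j)
      = (\<Sum>g<d. \<Sum>k<d. W i k * (cshift d g x k * cshift d g x j))"
    unfolding grad_f_def mat_vec_def assms sum_distrib_right by (simp add: mult.assoc)
  also have "\<dots> = (\<Sum>k<d. \<Sum>g<d. W i k * (cshift d g x k * cshift d g x j))" by (rule sum.swap)
  also have "\<dots> = (\<Sum>k<d. W i k * CC d x k j)"
    unfolding sum_distrib_left[symmetric] mat_mult_def mat_transpose_def circulant_def cshift_def ..
  finally show ?thesis unfolding avg_grad_f_def by simp
qed

lemma kron_avg:
  assumes "\<And>u. \<sigma>' u = u"
  shows "kron (avg_grad_f d \<sigma>' W x) (avg_grad_f d \<sigma>' W x) (i, i') (j, j')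
     = (\<Sum>k\<in>pidx d. kron W W (i, i') k * (kron (CC d x) (CC d x) k (j, j') / (real d)\<^sup>2))"
proof -
  have "kron (avg_grad_f d \<sigma>' W x) (avg_grad_f d \<sigma>' W x) (i, i') (j, j')
      = (\<Sum>a<d. W i a * CC d x a j) * (\<Sum>b<d. W i' b * CC d x b j') / (real d)\<^sup>2"
    unfolding kron_def avg_eq[OF assms] by (simp add: power2_eq_square)
  also have "\<dots> = (\<Sum>a<d. \<Sum>b<d. W i a * W i' b * (CC d x a j * CC d x b j' / (real d)\<^sup>2))"
    unfolding sum_product sum_divide_distrib by (intro sum.cong refl) (simp add: ac_simps)
  finally show ?thesis unfolding sum_pidx kron_def by simp
qed

lemma CC_prod: "CC d x a j * CC d x b j' = (\<Sum>m<d. \<Sum>n<d. x (idx d a m) * x (idx d j m) * x (idx d b n) * x (idx d j' n))"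
  unfolding CC_idx sum_product by (simp add: mult.assoc)

lemma idx_lt: "d > 0 \<Longrightarrow> idx d a m < d"
  unfolding idx_def by simp

lemma ET: assumes d: "d > 0"
  shows "complex_of_real ((\<Sum>m<d. \<Sum>n<d. iss (idx d a m) (idx d j m) (idx d b n) (idx d j' n)) / (real d)\<^sup>2)
    = pmat_mult (pidx d) (\<lambda>r c. cnj (kron (dft d) (dft d) r c))
          (pmat_mult (pidx d) (\<lambda>r c. pmat_mult (pidx d) (kron (dft d) (dft d)) (kron (dft d) (dft d)) r c * Mmat d r c)
            (\<lambda>r c. cnj (kron (dft d) (dft d) r c))) (a, b) (j, j')"
proof -
  have n1: "DD d (int a - int j) = (DD d (int j - int a) :: real)"
    using DD_neg[of d "int j - int a"] by simp
  have n2: "DD d (int b - int j') = (DD d (int j' - int b) :: real)"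
    using DD_neg[of d "int j' - int b"] by simp
  define A :: real where "A = DD d (int j - int a)"
  define B :: real where "B = DD d (int j' - int b)"
  define C :: real where "C = DD d ((int j - int a) - (int j' - int b))"
  define D :: real where "D = DD d ((int j - int a) + (int j' - int b))"
  have "(\<Sum>m<d. \<Sum>n<d. iss (idx d a m) (idx d j m) (idx d b n) (idx d j' n)) / (real d)\<^sup>2
     = A * B + (C + D) / real d"
    unfolding E_sum[OF d] n1 n2 A_def[symmetric] B_def[symmetric] C_def[symmetric] D_def[symmetric]
    using d by (simp add: field_simps power2_eq_square)
  then have "complex_of_real ((\<Sum>m<d. \<Sum>n<d. iss (idx d a m) (idx d j m) (idx d b n) (idx d j' n)) / (real d)\<^sup>2)
     = of_real A * of_real B + (of_real C + of_real D) / of_nat d"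
    by simp
  also have "\<dots> = DD d (int j - int a) * DD d (int j' - int b)
         + (DD d ((int j - int a) - (int j' - int b)) + DD d ((int j - int a) + (int j' - int b))) / of_nat d"
    unfolding A_def B_def C_def D_def of_real_DD ..
  finally show ?thesis unfolding T_val[OF d] .
qed

lemma pull:
  fixes f :: "'k \<Rightarrow> 'w \<Rightarrow> real" and c :: "'k \<Rightarrow> real"
  assumes "finite K" "\<And>k. k \<in> K \<Longrightarrow> integrable M (f k)"
  shows "(\<integral>\<omega>. (\<Sum>k\<in>K. c k * f k \<omega>) \<partial>M) = (\<Sum>k\<in>K. c k * (\<integral>\<omega>. f k \<omega> \<partial>M))"
proof -
  have "(\<integral>\<omega>. (\<Sum>k\<in>K. c k * f k \<omega>) \<partial>M) = (\<Sum>k\<in>K. (\<integral>\<omega>. c k * f k \<omega> \<partial>M))"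
    by (rule Bochner_Integration.integral_sum[where I=K and M=M and f="\<lambda>k \<omega>. c k * f k \<omega>"]) (use assms in auto)
  then show ?thesis by simp
qed

lemma finite_pidx: "finite (pidx d)" unfolding pidx_def by simp

lemma mem_pidx: "k \<in> pidx d \<longleftrightarrow> fst k < d \<and> snd k < d"
  unfolding pidx_def by (cases k) auto

theorem theorem5p2:
  fixes M :: "'w measure" and X :: "'w \<Rightarrow> nat \<Rightarrow> real"
    and \<sigma> \<sigma>' :: "real \<Rightarrow> real" and W :: "nat \<Rightarrow> nat \<Rightarrow> real" and p d :: nat
  assumes "prob_space M"
    and "d > 0"
    and "\<forall>j<d. (\<lambda>\<omega>. X \<omega> j) \<in> borel_measurable M"
    and "\<forall>u. (\<sigma> has_real_derivative \<sigma>' u) (at u)"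
  shows
    "(\<forall>i<p. \<forall>i'<p. \<forall>j<d. \<forall>j'<d.
       fisher M d \<sigma>' W X (i, i') (j, j') =
       pexp M (\<lambda>\<omega>. pmat_mult {(0, 0)}
                 (kron (colvec (\<lambda>k. \<sigma>' (mat_vec d W (X \<omega>) k))) (colvec (\<lambda>k. \<sigma>' (mat_vec d W (X \<omega>) k))))
                 (pmat_transpose (kron (colvec (X \<omega>)) (colvec (X \<omega>))))) (i, i') (j, j')) \<and>
    (\<sigma> = (\<lambda>u. u\<^sup>2 / 2) \<and>
     (\<forall>a<d. \<forall>b<d. \<forall>c<d. \<forall>e<d. integrable M (\<lambda>\<omega>. X \<omega> a * X \<omega> b * X \<omega> c * X \<omega> e)) \<longrightarrow>
     (\<forall>i<p. \<forall>i'<p. \<forall>j<d. \<forall>j'<d.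
       fisher M d \<sigma>' W X (i, i') (j, j') =
       pmat_mult (pidx d) (kron W W)
         (pexp M (\<lambda>\<omega>. kron (mat_mult 1 (colvec (X \<omega>)) (mat_transpose (colvec (X \<omega>))))
                            (mat_mult 1 (colvec (X \<omega>)) (mat_transpose (colvec (X \<omega>)))))) (i, i') (j, j'))) \<and>
    (\<sigma> = (\<lambda>u. u\<^sup>2 / 2) \<and>
     (\<forall>a<d. \<forall>b<d. \<forall>c<d. \<forall>e<d. integrable M (\<lambda>\<omega>. X \<omega> a * X \<omega> b * X \<omega> c * X \<omega> e)) \<longrightarrow>
     (\<forall>i<p. \<forall>i'<p. \<forall>j<d. \<forall>j'<d.
       fisher_bar M d \<sigma>' W X (i, i') (j, j') =
       pmat_mult (pidx d) (kron W W)
         (\<lambda>r c. pexp M (\<lambda>\<omega>. kron (mat_mult d (circulant d (X \<omega>)) (mat_transpose (circulant d (X \<omega>))))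
                                  (mat_mult d (circulant d (X \<omega>)) (mat_transpose (circulant d (X \<omega>))))) r c
                 / (real d)\<^sup>2) (i, i') (j, j'))) \<and>
    (\<sigma> = (\<lambda>u. u\<^sup>2 / 2) \<and>
     prob_space.indep_vars M (\<lambda>_. borel) (\<lambda>j \<omega>. X \<omega> j) {0..<d} \<and>
     (\<forall>j<d. distributed M lborel (\<lambda>\<omega>. X \<omega> j) std_normal_density) \<longrightarrow>
     (\<forall>i<p. \<forall>i'<p. \<forall>j<d. \<forall>j'<d.
       complex_of_real (fisher_bar M d \<sigma>' W X (i, i') (j, j')) =
       pmat_mult (pidx d)
         (pmat_mult (pidx d)
           (pmat_mult (pidx d) (kron (\<lambda>a b. complex_of_real (W a b)) (\<lambda>a b. complex_of_real (W a b)))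
              (\<lambda>r c. cnj (kron (dft d) (dft d) r c)))
           (\<lambda>r c. pmat_mult (pidx d) (kron (dft d) (dft d)) (kron (dft d) (dft d)) r c * Mmat d r c))
         (\<lambda>r c. cnj (kron (dft d) (dft d) r c)) (i, i') (j, j')))"
proof -
  have P: "prob_space M" and d: "d > 0" using assms by auto
  have part1: "\<forall>i<p. \<forall>i'<p. \<forall>j<d. \<forall>j'<d.
       fisher M d \<sigma>' W X (i, i') (j, j') =
       pexp M (\<lambda>\<omega>. pmat_mult {(0, 0)}
                 (kron (colvec (\<lambda>k. \<sigma>' (mat_vec d W (X \<omega>) k))) (colvec (\<lambda>k. \<sigma>' (mat_vec d W (X \<omega>) k))))
                 (pmat_transpose (kron (colvec (X \<omega>)) (colvec (X \<omega>))))) (i, i') (j, j')"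
    by (simp add: fisher_def pexp_def kron_def grad_f_def pmat_mult_def pmat_transpose_def colvec_def mult_ac)
  have part2: "\<sigma> = (\<lambda>u. u\<^sup>2 / 2) \<and>
     (\<forall>a<d. \<forall>b<d. \<forall>c<d. \<forall>e<d. integrable M (\<lambda>\<omega>. X \<omega> a * X \<omega> b * X \<omega> c * X \<omega> e)) \<longrightarrow>
     (\<forall>i<p. \<forall>i'<p. \<forall>j<d. \<forall>j'<d.
       fisher M d \<sigma>' W X (i, i') (j, j') =
       pmat_mult (pidx d) (kron W W)
         (pexp M (\<lambda>\<omega>. kron (mat_mult 1 (colvec (X \<omega>)) (mat_transpose (colvec (X \<omega>))))
                            (mat_mult 1 (colvec (X \<omega>)) (mat_transpose (colvec (X \<omega>)))))) (i, i') (j, j'))"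
  proof (intro impI allI)
    assume H: "\<sigma> = (\<lambda>u. u\<^sup>2 / 2) \<and>
     (\<forall>a<d. \<forall>b<d. \<forall>c<d. \<forall>e<d. integrable M (\<lambda>\<omega>. X \<omega> a * X \<omega> b * X \<omega> c * X \<omega> e))"
    have sid: "\<And>u. \<sigma>' u = u" using sigma_id assms(4) H by blast
    fix i i' j j'
    assume ii: "i < p" "i' < p" and j: "j < d" "j' < d"
      define f where "f = (\<lambda>k \<omega>. kron (mat_mult 1 (colvec (X \<omega>)) (mat_transpose (colvec (X \<omega>))))
                            (mat_mult 1 (colvec (X \<omega>)) (mat_transpose (colvec (X \<omega>)))) k (j, j'))"
      have fk: "f (a, b) \<omega> = X \<omega> a * X \<omega> j * X \<omega> b * X \<omega> j'" for a b \<omega>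
        unfolding f_def kron_def mat_mult_def colvec_def mat_transpose_def by (simp add: mult_ac)
      have int: "integrable M (f k)" if kK: "k \<in> pidx d" for k
      proof -
        obtain a b where k: "k = (a, b)" "a < d" "b < d" using kK unfolding mem_pidx by (cases k) auto
        have "f (a, b) = (\<lambda>\<omega>. X \<omega> a * X \<omega> j * X \<omega> b * X \<omega> j')" by (rule ext) (rule fk)
        then show ?thesis using H j k by simp
      qed
      have pw: "kron (grad_f d \<sigma>' W (X \<omega>)) (grad_f d \<sigma>' W (X \<omega>)) (i, i') (j, j')
          = (\<Sum>k\<in>pidx d. kron W W (i, i') k * f k \<omega>)" for \<omega>
      proof -
        have "kron (grad_f d \<sigma>' W (X \<omega>)) (grad_f d \<sigma>' W (X \<omega>)) (i, i') (j, j')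
          = (\<Sum>a<d. W i a * X \<omega> a) * (\<Sum>b<d. W i' b * X \<omega> b) * X \<omega> j * X \<omega> j'"
          unfolding kron_def grad_f_def mat_vec_def sid by (simp add: mult_ac)
        also have "\<dots> = (\<Sum>a<d. \<Sum>b<d. W i a * X \<omega> a * (W i' b * X \<omega> b)) * X \<omega> j * X \<omega> j'"
          by (simp only: sum_product)
        also have "\<dots> = (\<Sum>a<d. \<Sum>b<d. W i a * X \<omega> a * (W i' b * X \<omega> b) * X \<omega> j * X \<omega> j')"
          by (simp only: sum_distrib_right)
        also have "\<dots> = (\<Sum>a<d. \<Sum>b<d. W i a * W i' b * f (a, b) \<omega>)"
          unfolding fk by (intro sum.cong refl) (simp add: mult_ac)
        finally show ?thesis unfolding sum_pidx kron_def by simp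
      qed
      have "fisher M d \<sigma>' W X (i, i') (j, j') = (\<integral>\<omega>. (\<Sum>k\<in>pidx d. kron W W (i, i') k * f k \<omega>) \<partial>M)"
        unfolding fisher_def pexp_def pw ..
      also have "\<dots> = (\<Sum>k\<in>pidx d. kron W W (i, i') k * (\<integral>\<omega>. f k \<omega> \<partial>M))"
        by (rule pull[OF finite_pidx int])
      finally show "fisher M d \<sigma>' W X (i, i') (j, j') =
       pmat_mult (pidx d) (kron W W)
         (pexp M (\<lambda>\<omega>. kron (mat_mult 1 (colvec (X \<omega>)) (mat_transpose (colvec (X \<omega>))))
                            (mat_mult 1 (colvec (X \<omega>)) (mat_transpose (colvec (X \<omega>)))))) (i, i') (j, j')"
        unfolding pmat_mult_def pexp_def f_def .
  qed
  have part3: "\<sigma> = (\<lambda>u. u\<^sup>2 / 2) \<and>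
     (\<forall>a<d. \<forall>b<d. \<forall>c<d. \<forall>e<d. integrable M (\<lambda>\<omega>. X \<omega> a * X \<omega> b * X \<omega> c * X \<omega> e)) \<longrightarrow>
     (\<forall>i<p. \<forall>i'<p. \<forall>j<d. \<forall>j'<d.
       fisher_bar M d \<sigma>' W X (i, i') (j, j') =
       pmat_mult (pidx d) (kron W W)
         (\<lambda>r c. pexp M (\<lambda>\<omega>. kron (mat_mult d (circulant d (X \<omega>)) (mat_transpose (circulant d (X \<omega>))))
                                  (mat_mult d (circulant d (X \<omega>)) (mat_transpose (circulant d (X \<omega>))))) r c
                 / (real d)\<^sup>2) (i, i') (j, j'))"
  proof (intro impI allI)
    assume H: "\<sigma> = (\<lambda>u. u\<^sup>2 / 2) \<and>
     (\<forall>a<d. \<forall>b<d. \<forall>c<d. \<forall>e<d. integrable M (\<lambda>\<omega>. X \<omega> a * X \<omega> b * X \<omega> c * X \<omega> e))"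
    have sid: "\<And>u. \<sigma>' u = u" using sigma_id assms(4) H by blast
    fix i i' j j'
    assume ii: "i < p" "i' < p" and j: "j < d" "j' < d"
      define f where "f = (\<lambda>k \<omega>. kron (CC d (X \<omega>)) (CC d (X \<omega>)) k (j, j') / (real d)\<^sup>2)"
      have int: "integrable M (f k)" if kK: "k \<in> pidx d" for k
      proof -
        obtain a b where k: "k = (a, b)" "a < d" "b < d" using kK unfolding mem_pidx by (cases k) auto
        have "integrable M (\<lambda>\<omega>. (\<Sum>m<d. \<Sum>n<d. X \<omega> (idx d a m) * X \<omega> (idx d j m) * X \<omega> (idx d b n) * X \<omega> (idx d j' n)))"
          by (intro Bochner_Integration.integrable_sum) (use H idx_lt[OF d] in blast)
        then show ?thesis unfolding f_def k kron_def prod.case CC_prod by simp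
      qed
      have "fisher_bar M d \<sigma>' W X (i, i') (j, j') = (\<integral>\<omega>. (\<Sum>k\<in>pidx d. kron W W (i, i') k * f k \<omega>) \<partial>M)"
        unfolding fisher_bar_def pexp_def kron_avg[OF sid] f_def ..
      also have "\<dots> = (\<Sum>k\<in>pidx d. kron W W (i, i') k * (\<integral>\<omega>. f k \<omega> \<partial>M))"
        by (rule pull[OF finite_pidx int])
      finally show "fisher_bar M d \<sigma>' W X (i, i') (j, j') =
       pmat_mult (pidx d) (kron W W)
         (\<lambda>r c. pexp M (\<lambda>\<omega>. kron (mat_mult d (circulant d (X \<omega>)) (mat_transpose (circulant d (X \<omega>))))
                                  (mat_mult d (circulant d (X \<omega>)) (mat_transpose (circulant d (X \<omega>))))) r c
                 / (real d)\<^sup>2) (i, i') (j, j')"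
        unfolding pmat_mult_def pexp_def f_def by simp
  qed
  have part4: "\<sigma> = (\<lambda>u. u\<^sup>2 / 2) \<and>
     prob_space.indep_vars M (\<lambda>_. borel) (\<lambda>j \<omega>. X \<omega> j) {0..<d} \<and>
     (\<forall>j<d. distributed M lborel (\<lambda>\<omega>. X \<omega> j) std_normal_density) \<longrightarrow>
     (\<forall>i<p. \<forall>i'<p. \<forall>j<d. \<forall>j'<d.
       complex_of_real (fisher_bar M d \<sigma>' W X (i, i') (j, j')) =
       pmat_mult (pidx d)
         (pmat_mult (pidx d)
           (pmat_mult (pidx d) (kron (\<lambda>a b. complex_of_real (W a b)) (\<lambda>a b. complex_of_real (W a b)))
              (\<lambda>r c. cnj (kron (dft d) (dft d) r c)))
           (\<lambda>r c. pmat_mult (pidx d) (kron (dft d) (dft d)) (kron (dft d) (dft d)) r c * Mmat d r c))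
         (\<lambda>r c. cnj (kron (dft d) (dft d) r c)) (i, i') (j, j'))"
  proof (intro impI allI)
    assume H: "\<sigma> = (\<lambda>u. u\<^sup>2 / 2) \<and>
     prob_space.indep_vars M (\<lambda>_. borel) (\<lambda>j \<omega>. X \<omega> j) {0..<d} \<and>
     (\<forall>j<d. distributed M lborel (\<lambda>\<omega>. X \<omega> j) std_normal_density)"
    have ind: "prob_space.indep_vars M (\<lambda>_. borel) (\<lambda>j \<omega>. X \<omega> j) {0..<d}"
      and dist: "\<forall>j<d. distributed M lborel (\<lambda>\<omega>. X \<omega> j) std_normal_density" using H by auto
    have I4: "\<forall>a<d. \<forall>b<d. \<forall>c<d. \<forall>e<d. integrable M (\<lambda>\<omega>. X \<omega> a * X \<omega> b * X \<omega> c * X \<omega> e)"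
      using gauss4(1)[OF P ind dist] by blast
    fix i i' j j'
    assume ii: "i < p" "i' < p" and j: "j < d" "j' < d"
      have fb: "fisher_bar M d \<sigma>' W X (i, i') (j, j') =
       pmat_mult (pidx d) (kron W W)
         (\<lambda>r c. pexp M (\<lambda>\<omega>. kron (CC d (X \<omega>)) (CC d (X \<omega>))) r c / (real d)\<^sup>2) (i, i') (j, j')"
        using part3 H I4 ii j by blast
      have E: "pexp M (\<lambda>\<omega>. kron (CC d (X \<omega>)) (CC d (X \<omega>))) (a, b) (j, j')
          = (\<Sum>m<d. \<Sum>n<d. iss (idx d a m) (idx d j m) (idx d b n) (idx d j' n))" if "a < d" "b < d" for a b
      proof -
        have "pexp M (\<lambda>\<omega>. kron (CC d (X \<omega>)) (CC d (X \<omega>))) (a, b) (j, j')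
          = (\<integral>\<omega>. (\<Sum>m<d. \<Sum>n<d. X \<omega> (idx d a m) * X \<omega> (idx d j m) * X \<omega> (idx d b n) * X \<omega> (idx d j' n)) \<partial>M)"
          unfolding pexp_def kron_def prod.case CC_prod ..
        also have "\<dots> = (\<Sum>m<d. \<Sum>n<d. (\<integral>\<omega>. X \<omega> (idx d a m) * X \<omega> (idx d j m) * X \<omega> (idx d b n) * X \<omega> (idx d j' n) \<partial>M))"
          using I4 idx_lt[OF d] by (simp add: Bochner_Integration.integral_sum Bochner_Integration.integrable_sum)
        also have "\<dots> = (\<Sum>m<d. \<Sum>n<d. iss (idx d a m) (idx d j m) (idx d b n) (idx d j' n))"
          using gauss4(2)[OF P ind dist] idx_lt[OF d] by simp
        finally show ?thesis .
      qed
      have "complex_of_real (fisher_bar M d \<sigma>' W X (i, i') (j, j'))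
         = (\<Sum>k\<in>pidx d. kron (\<lambda>a b. complex_of_real (W a b)) (\<lambda>a b. complex_of_real (W a b)) (i, i') k *
              pmat_mult (pidx d) (\<lambda>r c. cnj (kron (dft d) (dft d) r c))
                (pmat_mult (pidx d) (\<lambda>r c. pmat_mult (pidx d) (kron (dft d) (dft d)) (kron (dft d) (dft d)) r c * Mmat d r c)
                  (\<lambda>r c. cnj (kron (dft d) (dft d) r c))) k (j, j'))"
        unfolding fb pmat_mult_def[of "pidx d" "kron W W"] of_real_sum
      proof (intro sum.cong refl)
        fix k assume "k \<in> pidx d"
        then obtain a b where k: "k = (a, b)" "a < d" "b < d" unfolding mem_pidx by (cases k) auto
        show "complex_of_real (kron W W (i, i') k * (pexp M (\<lambda>\<omega>. kron (CC d (X \<omega>)) (CC d (X \<omega>))) k (j, j') / (real d)\<^sup>2))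
          = kron (\<lambda>a b. complex_of_real (W a b)) (\<lambda>a b. complex_of_real (W a b)) (i, i') k *
              pmat_mult (pidx d) (\<lambda>r c. cnj (kron (dft d) (dft d) r c))
                (pmat_mult (pidx d) (\<lambda>r c. pmat_mult (pidx d) (kron (dft d) (dft d)) (kron (dft d) (dft d)) r c * Mmat d r c)
                  (\<lambda>r c. cnj (kron (dft d) (dft d) r c))) k (j, j')"
          unfolding k(1) E[OF k(2,3)] unfolding ET[OF d, symmetric] unfolding kron_def by simp
      qed
      also have "\<dots> = pmat_mult (pidx d)
         (pmat_mult (pidx d)
           (pmat_mult (pidx d) (kron (\<lambda>a b. complex_of_real (W a b)) (\<lambda>a b. complex_of_real (W a b)))
              (\<lambda>r c. cnj (kron (dft d) (dft d) r c)))
           (\<lambda>r c. pmat_mult (pidx d) (kron (dft d) (dft d)) (kron (dft d) (dft d)) r c * Mmat d r c))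
         (\<lambda>r c. cnj (kron (dft d) (dft d) r c)) (i, i') (j, j')"
        unfolding pmat_assoc by (simp add: pmat_mult_def)
      finally show "complex_of_real (fisher_bar M d \<sigma>' W X (i, i') (j, j')) =
       pmat_mult (pidx d)
         (pmat_mult (pidx d)
           (pmat_mult (pidx d) (kron (\<lambda>a b. complex_of_real (W a b)) (\<lambda>a b. complex_of_real (W a b)))
              (\<lambda>r c. cnj (kron (dft d) (dft d) r c)))
           (\<lambda>r c. pmat_mult (pidx d) (kron (dft d) (dft d)) (kron (dft d) (dft d)) r c * Mmat d r c))
         (\<lambda>r c. cnj (kron (dft d) (dft d) r c)) (i, i') (j, j')" .
  qed
  show ?thesis using part1 part2 part3 part4 by blast
qed

end
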